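(* Let $d\in\mathbb{N}$. Then for any integer $k\geq 19^{2d-1}+1$ and any step preserving continuous map $F\colon S_{\ell_\infty^k}\to S_{\ell_1^k}$ such that $F(1,\ldots,1)\neq F(-1,\ldots,-1)$, we have $\omega_F(\tfrac1d)\geq\tfrac12$. In particular, there is no sequence $(F_k\colon S_{\ell_\infty^k}\to S_{\ell_1^k})_{k=1}^\infty$ of equi-uniformly continuous step preserving homeomorphisms.
   Context: For $p\in\{1,\infty\}$, $S_{\ell_p^k}$ denotes the unit sphere of $\mathbb{R}^k$ with the $\ell_p$-norm. Writing $F=(F_i)_{i=1}^k$ for the coordinate functions, $F$ is step preserving if for all $x=(x_i)_{i=1}^k\in S_{\ell_\infty^k}$ and all $i,j\in\{1,\dots,k\}$, $x_i=x_j$ implies $F_i(x)=F_j(x)$. The modulus of uniform continuity of a map $F$ between metric spaces is $\omega_F(t)=\sup\{d(F(x),F(y)): d(x,y)\le t\}$. A sequence $(F_k)_k$ is equi-uniformly continuous if for every $\varepsilon>0$ there is $\delta>0$ with $\omega_{F_k}(\delta)<\varepsilon$ for all $k$. *)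

theory Defs
  imports Complex_Main
begin

text \<open>Vectors of R^k are represented as functions nat => real vanishing at indices >= k.\<close>

definition vec_k :: "nat \<Rightarrow> (nat \<Rightarrow> real) \<Rightarrow> bool" where
  "vec_k k x \<longleftrightarrow> (\<forall>i\<ge>k. x i = 0)"

definition linf_norm :: "nat \<Rightarrow> (nat \<Rightarrow> real) \<Rightarrow> real" where
  "linf_norm k x = Max (insert 0 ((\<lambda>i. \<bar>x i\<bar>) ` {..<k}))"

definition l1_norm :: "nat \<Rightarrow> (nat \<Rightarrow> real) \<Rightarrow> real" where
  "l1_norm k x = (\<Sum>i<k. \<bar>x i\<bar>)"

definition linf_dist :: "nat \<Rightarrow> (nat \<Rightarrow> real) \<Rightarrow> (nat \<Rightarrow> real) \<Rightarrow> real" where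
  "linf_dist k x y = linf_norm k (\<lambda>i. x i - y i)"

definition l1_dist :: "nat \<Rightarrow> (nat \<Rightarrow> real) \<Rightarrow> (nat \<Rightarrow> real) \<Rightarrow> real" where
  "l1_dist k x y = l1_norm k (\<lambda>i. x i - y i)"

definition S_inf :: "nat \<Rightarrow> (nat \<Rightarrow> real) set" where
  "S_inf k = {x. vec_k k x \<and> linf_norm k x = 1}"

definition S_one :: "nat \<Rightarrow> (nat \<Rightarrow> real) set" where
  "S_one k = {x. vec_k k x \<and> l1_norm k x = 1}"

definition const_vec :: "nat \<Rightarrow> real \<Rightarrow> (nat \<Rightarrow> real)" where
  "const_vec k c = (\<lambda>i. if i < k then c else 0)"

definition cont_wrt ::
  "'a set \<Rightarrow> ('a \<Rightarrow> 'a \<Rightarrow> real) \<Rightarrow> ('b \<Rightarrow> 'b \<Rightarrow> real) \<Rightarrow> ('a \<Rightarrow> 'b) \<Rightarrow> bool" where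
  "cont_wrt A dA dB F \<longleftrightarrow>
     (\<forall>x\<in>A. \<forall>e>0. \<exists>\<delta>>0. \<forall>y\<in>A. dA x y < \<delta> \<longrightarrow> dB (F x) (F y) < e)"

definition step_preserving :: "nat \<Rightarrow> ((nat \<Rightarrow> real) \<Rightarrow> (nat \<Rightarrow> real)) \<Rightarrow> bool" where
  "step_preserving k F \<longleftrightarrow>
     (\<forall>x\<in>S_inf k. \<forall>i<k. \<forall>j<k. x i = x j \<longrightarrow> F x i = F x j)"

definition modulus :: "nat \<Rightarrow> ((nat \<Rightarrow> real) \<Rightarrow> (nat \<Rightarrow> real)) \<Rightarrow> real \<Rightarrow> real" where
  "modulus k F t = Sup {l1_dist k (F x) (F y) | x y.
      x \<in> S_inf k \<and> y \<in> S_inf k \<and> linf_dist k x y \<le> t}"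

definition homeo_k :: "nat \<Rightarrow> ((nat \<Rightarrow> real) \<Rightarrow> (nat \<Rightarrow> real)) \<Rightarrow> bool" where
  "homeo_k k F \<longleftrightarrow>
     F ` S_inf k = S_one k \<and> inj_on F (S_inf k) \<and>
     cont_wrt (S_inf k) (linf_dist k) (l1_dist k) F \<and>
     (\<exists>G. G ` S_one k = S_inf k \<and> (\<forall>x\<in>S_inf k. G (F x) = x) \<and>
          cont_wrt (S_one k) (l1_dist k) (linf_dist k) G)"

end

theory Submission
  imports Defs
begin

lemma S_one_sum: "x \<in> S_one k \<Longrightarrow> (\<Sum>i<k. \<bar>x i\<bar>) = 1"
  by (simp add: S_one_def l1_norm_def)

lemma linf_dist_ge: "i < k \<Longrightarrow> \<bar>x i - y i\<bar> \<le> linf_dist k x y"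
  unfolding linf_dist_def linf_norm_def by (rule Max_ge) auto

lemma linf_dist_le: assumes "\<forall>i<k. \<bar>x i - y i\<bar> \<le> r" "0 \<le> r" shows "linf_dist k x y \<le> r"
  unfolding linf_dist_def linf_norm_def using assms by (intro Max.boundedI) auto

lemma S_inf_I:
  assumes "vec_k k x" "\<forall>i<k. \<bar>x i\<bar> \<le> 1" "j < k" "\<bar>x j\<bar> = 1"
  shows "x \<in> S_inf k"
proof -
  have "linf_norm k x \<le> 1" unfolding linf_norm_def using assms by (intro Max.boundedI) auto
  moreover have "1 \<le> linf_norm k x"
  proof -
    have "\<bar>x j\<bar> \<in> insert 0 ((\<lambda>i. \<bar>x i\<bar>) ` {..<k})" using assms by auto
    then have "\<bar>x j\<bar> \<le> linf_norm k x" unfolding linf_norm_def by (intro Max_ge) auto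
    then show ?thesis using assms by simp
  qed
  ultimately show ?thesis using assms(1) by (simp add: S_inf_def)
qed

lemma S_inf_bound: "x \<in> S_inf k \<Longrightarrow> i < k \<Longrightarrow> \<bar>x i\<bar> \<le> 1"
proof -
  assume a: "x \<in> S_inf k" "i < k"
  have "\<bar>x i\<bar> \<in> insert 0 ((\<lambda>i. \<bar>x i\<bar>) ` {..<k})" using a by auto
  then have "\<bar>x i\<bar> \<le> linf_norm k x" unfolding linf_norm_def by (intro Max_ge) auto
  then show ?thesis using a by (simp add: S_inf_def)
qed

lemma const_in_S_inf: "0 < k \<Longrightarrow> \<bar>c\<bar> = 1 \<Longrightarrow> const_vec k c \<in> S_inf k"
  by (rule S_inf_I[where j=0]) (auto simp: vec_k_def const_vec_def)

lemma l1_dist_le2: assumes "u \<in> S_one k" "v \<in> S_one k" shows "l1_dist k u v \<le> 2"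
proof -
  have "l1_dist k u v \<le> (\<Sum>i<k. \<bar>u i\<bar> + \<bar>v i\<bar>)"
    unfolding l1_dist_def l1_norm_def by (rule sum_mono) auto
  also have "\<dots> = 2" using S_one_sum[OF assms(1)] S_one_sum[OF assms(2)] by (simp add: sum.distrib)
  finally show ?thesis .
qed

lemma l1_dist_tri: "l1_dist k u w \<le> l1_dist k u v + l1_dist k v w"
  unfolding l1_dist_def l1_norm_def sum.distrib[symmetric] by (rule sum_mono) auto

lemma modulus_pair:
  assumes FS: "F ` S_inf k \<subseteq> S_one k" and xy: "x \<in> S_inf k" "y \<in> S_inf k" "linf_dist k x y \<le> t"
  shows "l1_dist k (F x) (F y) \<le> modulus k F t"
  unfolding modulus_def
proof (rule cSup_upper)
  show "l1_dist k (F x) (F y) \<in> {l1_dist k (F x) (F y) |x y. x \<in> S_inf k \<and> y \<in> S_inf k \<and> linf_dist k x y \<le> t}"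
    using xy by blast
  show "bdd_above {l1_dist k (F x) (F y) |x y. x \<in> S_inf k \<and> y \<in> S_inf k \<and> linf_dist k x y \<le> t}"
    using FS by (intro bdd_aboveI[where M=2]) (auto intro!: l1_dist_le2)
qed

lemma modulus_mono:
  assumes FS: "F ` S_inf k \<subseteq> S_one k" and k: "0 < k" and st: "0 \<le> s" "s \<le> t"
  shows "modulus k F s \<le> modulus k F t"
  unfolding modulus_def
proof (rule cSup_subset_mono)
  have "const_vec k 1 \<in> S_inf k" using k by (simp add: const_in_S_inf)
  moreover have "linf_dist k (const_vec k 1) (const_vec k 1) \<le> s"
    using st by (intro linf_dist_le) auto
  ultimately show "{l1_dist k (F x) (F y) |x y. x \<in> S_inf k \<and> y \<in> S_inf k \<and> linf_dist k x y \<le> s} \<noteq> {}"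
    by blast
  show "bdd_above {l1_dist k (F x) (F y) |x y. x \<in> S_inf k \<and> y \<in> S_inf k \<and> linf_dist k x y \<le> t}"
    using FS by (intro bdd_aboveI[where M=2]) (auto intro!: l1_dist_le2)
  show "{l1_dist k (F x) (F y) |x y. x \<in> S_inf k \<and> y \<in> S_inf k \<and> linf_dist k x y \<le> s}
    \<subseteq> {l1_dist k (F x) (F y) |x y. x \<in> S_inf k \<and> y \<in> S_inf k \<and> linf_dist k x y \<le> t}"
    using st by fastforce
qed

lemma level_mass:
  fixes f x :: "nat \<Rightarrow> real"
  assumes f1: "(\<Sum>i<k. \<bar>f i\<bar>) = 1"
    and fc: "\<forall>i<k. \<forall>j<k. x i = x j \<longrightarrow> f i = f j"
    and N: "N \<subseteq> {..<k}"
    and lev: "\<forall>j<k. 8 * card {i\<in>N. x i = x j} \<le> 3 * card {i. i<k \<and> x i = x j}"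
  shows "(\<Sum>i\<in>N. \<bar>f i\<bar>) \<le> 3/8"
proof -
  define L where "L j = {i. i<k \<and> x i = x j}" for j
  have Lfin: "finite (L j)" for j unfolding L_def by auto
  have Lpos: "j<k \<Longrightarrow> 0 < card (L j)" for j using Lfin by (auto simp: L_def card_gt_0_iff)
  have key: "\<bar>f i\<bar> = (\<Sum>j<k. if x j = x i then \<bar>f j\<bar> / card (L j) else 0)" if "i<k" for i
  proof -
    have "(\<Sum>j<k. if x j = x i then \<bar>f j\<bar> / card (L j) else 0)
        = (\<Sum>j\<in>{j\<in>{..<k}. x j = x i}. \<bar>f j\<bar> / card (L j))"
      by (rule sum.inter_filter[symmetric]) auto
    also have "\<dots> = (\<Sum>j\<in>L i. \<bar>f i\<bar> / card (L i))"
    proof (rule sum.cong)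
      show "{j\<in>{..<k}. x j = x i} = L i" unfolding L_def by auto
      fix j assume "j \<in> L i"
      then have xj: "x j = x i" "j < k" unfolding L_def by auto
      have "L j = L i" unfolding L_def using xj(1) by simp
      moreover have "f j = f i" using fc xj that by blast
      ultimately show "\<bar>f j\<bar> / card (L j) = \<bar>f i\<bar> / card (L i)" by simp
    qed
    also have "\<dots> = \<bar>f i\<bar>" using Lpos[OF that] by simp
    finally show ?thesis by simp
  qed
  have "(\<Sum>i\<in>N. \<bar>f i\<bar>) = (\<Sum>i\<in>N. \<Sum>j<k. if x j = x i then \<bar>f j\<bar> / card (L j) else 0)"
  proof (rule sum.cong[OF refl])
    fix i assume "i \<in> N"
    then have "i < k" using N by auto
    then show "\<bar>f i\<bar> = (\<Sum>j<k. if x j = x i then \<bar>f j\<bar> / card (L j) else 0)" by (rule key)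
  qed
  also have "\<dots> = (\<Sum>j<k. \<Sum>i\<in>N. if x j = x i then \<bar>f j\<bar> / card (L j) else 0)" by (rule sum.swap)
  also have "\<dots> = (\<Sum>j<k. \<bar>f j\<bar> * (card {i\<in>N. x j = x i} / card (L j)))"
  proof (rule sum.cong)
    fix j assume "j \<in> {..<k}"
    have fN: "finite N" using N finite_subset by blast
    have "(\<Sum>i\<in>N. if x j = x i then \<bar>f j\<bar> / card (L j) else 0) = (\<Sum>i\<in>{i\<in>N. x j = x i}. \<bar>f j\<bar> / card (L j))"
      using fN by (rule sum.inter_filter[symmetric])
    also have "\<dots> = \<bar>f j\<bar> * (card {i\<in>N. x j = x i} / card (L j))" by simp
    finally show "(\<Sum>i\<in>N. if x j = x i then \<bar>f j\<bar> / card (L j) else 0) = \<bar>f j\<bar> * (card {i\<in>N. x j = x i} / card (L j))" .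
  qed simp
  also have "\<dots> \<le> (\<Sum>j<k. \<bar>f j\<bar> * (3/8))"
  proof (rule sum_mono)
    fix j assume j: "j \<in> {..<k}"
    have eqs: "{i\<in>N. x j = x i} = {i\<in>N. x i = x j}" by auto
    have "8 * card {i\<in>N. x i = x j} \<le> 3 * card (L j)"
      using lev j unfolding L_def by auto
    then have "real (8 * card {i\<in>N. x i = x j}) \<le> real (3 * card (L j))"
      by (simp only: of_nat_le_iff)
    then have "8 * real (card {i\<in>N. x j = x i}) \<le> 3 * real (card (L j))"
      unfolding eqs by simp
    then have "real (card {i\<in>N. x j = x i}) / card (L j) \<le> 3/8"
      using Lpos[of j] j by (simp add: divide_le_eq)
    then show "\<bar>f j\<bar> * (card {i\<in>N. x j = x i} / card (L j)) \<le> \<bar>f j\<bar> * (3/8)"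
      by (intro mult_left_mono) auto
  qed
  also have "\<dots> = (\<Sum>j<k. \<bar>f j\<bar>) * (3/8)" by (rule sum_distrib_right[symmetric])
  also have "\<dots> = 3/8" using f1 by simp
  finally show ?thesis .
qed

lemma F_const_vec:
  assumes FS: "F ` S_inf k \<subseteq> S_one k" and SP: "step_preserving k F" and k: "0<k" and c: "\<bar>c\<bar> = 1"
  shows "\<exists>v. \<bar>v\<bar> * k = 1 \<and> F (const_vec k c) = const_vec k v"
proof -
  let ?x = "const_vec k c"
  have xS: "?x \<in> S_inf k" using k c by (simp add: const_in_S_inf)
  then have FxS: "F ?x \<in> S_one k" using FS by blast
  have eq: "F ?x i = F ?x 0" if "i<k" for i
  proof -
    have "?x i = ?x 0" using that k by (simp add: const_vec_def)
    then show ?thesis using SP xS that k unfolding step_preserving_def by blast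
  qed
  have out: "F ?x i = 0" if "\<not> i<k" for i using FxS that by (auto simp: S_one_def vec_k_def)
  have "F ?x = const_vec k (F ?x 0)"
  proof
    fix i show "F ?x i = const_vec k (F ?x 0) i"
      using eq[of i] out[of i] by (cases "i<k") (simp_all add: const_vec_def)
  qed
  moreover have "\<bar>F ?x 0\<bar> * k = 1"
  proof -
    have "(\<Sum>i<k. \<bar>F ?x i\<bar>) = (\<Sum>i<k. \<bar>F ?x 0\<bar>)"
    proof (rule sum.cong[OF refl])
      fix i assume "i \<in> {..<k}" then show "\<bar>F ?x i\<bar> = \<bar>F ?x 0\<bar>" using eq[of i] by simp
    qed
    then show ?thesis using S_one_sum[OF FxS] by (simp add: mult.commute)
  qed
  ultimately show ?thesis by blast
qed

lemma chain_contra: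
  fixes F :: "(nat \<Rightarrow> real) \<Rightarrow> nat \<Rightarrow> real" and X :: "nat \<Rightarrow> nat \<Rightarrow> real"
  assumes FS: "F ` S_inf k \<subseteq> S_one k" and SP: "step_preserving k F"
    and ne: "F (const_vec k 1) \<noteq> F (const_vec k (-1))"
    and small: "\<forall>x\<in>S_inf k. \<forall>y\<in>S_inf k. linf_dist k x y \<le> r \<longrightarrow> l1_dist k (F x) (F y) < 1/2"
    and X0: "X 0 = const_vec k 1" and XT: "X T = const_vec k (-1)"
    and XS: "\<forall>t\<le>T. X t \<in> S_inf k"
    and Xstep: "\<forall>t<T. linf_dist k (X t) (X (Suc t)) \<le> r"
    and Csub: "C \<subseteq> {..<k}" and Cne: "C \<noteq> {}"
    and Cconst: "\<forall>t\<le>T. \<forall>i\<in>C. \<forall>j\<in>C. X t i = X t j"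
    and Nsub: "\<forall>t\<le>T. N t \<subseteq> {..<k} - C"
    and Npart: "\<forall>t<T. N t \<inter> N (Suc t) = {} \<and> N t \<union> N (Suc t) = {..<k} - C"
    and Nlev: "\<forall>t\<le>T. \<forall>j<k. 8 * card {i\<in>N t. X t i = X t j} \<le> 3 * card {i. i<k \<and> X t i = X t j}"
  shows False
proof -
  have k: "0 < k" using Csub Cne by auto
  define c where "c t = (\<Sum>i\<in>C. F (X t) i)" for t
  have finC: "finite C" using Csub finite_subset by blast
  have FXS: "F (X t) \<in> S_one k" if "t \<le> T" for t using FS XS that by blast
  have Fc: "F (X t) i = F (X t) j" if "t\<le>T" "i\<in>C" "j\<in>C" for t i j
  proof -
    have "X t i = X t j" using Cconst that by blast
    moreover have "i<k" "j<k" using Csub that by auto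
    ultimately show ?thesis using SP XS that unfolding step_preserving_def by blast
  qed
  obtain i0 where i0: "i0 \<in> C" using Cne by blast
  have absc: "(\<Sum>i\<in>C. \<bar>F (X t) i\<bar>) = \<bar>c t\<bar>" if "t \<le> T" for t
  proof -
    have "(\<Sum>i\<in>C. \<bar>F (X t) i\<bar>) = (\<Sum>i\<in>C. \<bar>F (X t) i0\<bar>)"
    proof (rule sum.cong[OF refl])
      fix i assume "i \<in> C"
      show "\<bar>F (X t) i\<bar> = \<bar>F (X t) i0\<bar>" using Fc[OF that \<open>i\<in>C\<close> i0] by simp
    qed
    also have "\<dots> = card C * \<bar>F (X t) i0\<bar>" by simp
    finally have 1: "(\<Sum>i\<in>C. \<bar>F (X t) i\<bar>) = card C * \<bar>F (X t) i0\<bar>" .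
    have "c t = (\<Sum>i\<in>C. F (X t) i0)" unfolding c_def
    proof (rule sum.cong[OF refl])
      fix i assume "i \<in> C"
      show "F (X t) i = F (X t) i0" using Fc[OF that \<open>i\<in>C\<close> i0] by simp
    qed
    also have "\<dots> = card C * F (X t) i0" by simp
    finally have "\<bar>c t\<bar> = card C * \<bar>F (X t) i0\<bar>" by (simp add: abs_mult)
    then show ?thesis using 1 by simp
  qed
  have E: "(\<Sum>i\<in>N t. \<bar>F (X t) i\<bar>) \<le> 3/8" if "t \<le> T" for t
  proof (rule level_mass[where x = "X t" and k=k])
    show "(\<Sum>i<k. \<bar>F (X t) i\<bar>) = 1" using S_one_sum[OF FXS[OF that]] .
    show "\<forall>i<k. \<forall>j<k. X t i = X t j \<longrightarrow> F (X t) i = F (X t) j"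
      using SP XS that unfolding step_preserving_def by blast
    show "N t \<subseteq> {..<k}" using Nsub that by blast
    show "\<forall>j<k. 8 * card {i \<in> N t. X t i = X t j} \<le> 3 * card {i. i < k \<and> X t i = X t j}"
      using Nlev that by blast
  qed
  have step: "0 < c t * c (Suc t)" if tT: "t < T" for t
  proof (rule ccontr)
    assume "\<not> 0 < c t * c (Suc t)"
    then have cc: "c t * c (Suc t) \<le> 0" by simp
    let ?f = "F (X t)" and ?g = "F (X (Suc t))"
    let ?N = "N t" and ?M = "N (Suc t)"
    have NM: "?N \<inter> ?M = {}" "?N \<union> ?M = {..<k} - C" using Npart tT by auto
    have "finite (?N \<union> ?M)" unfolding NM(2) by simp
    then have finN: "finite ?N" "finite ?M" by auto
    have split: "(\<Sum>i<k. h i) = (\<Sum>i\<in>C. h i) + (\<Sum>i\<in>?N. h i) + (\<Sum>i\<in>?M. h i)" for h :: "nat \<Rightarrow> real"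
    proof -
      have "{..<k} = C \<union> (?N \<union> ?M)" using NM Csub by auto
      then have "(\<Sum>i<k. h i) = (\<Sum>i\<in>C \<union> (?N \<union> ?M). h i)" by simp
      also have "\<dots> = (\<Sum>i\<in>C. h i) + (\<Sum>i\<in>?N \<union> ?M. h i)"
        using NM finC finN by (intro sum.union_disjoint) auto
      also have "(\<Sum>i\<in>?N \<union> ?M. h i) = (\<Sum>i\<in>?N. h i) + (\<Sum>i\<in>?M. h i)"
        using NM finN by (intro sum.union_disjoint) auto
      finally show ?thesis by simp
    qed
    have f1: "(\<Sum>i\<in>C. \<bar>?f i\<bar>) + (\<Sum>i\<in>?N. \<bar>?f i\<bar>) + (\<Sum>i\<in>?M. \<bar>?f i\<bar>) = 1"
      using S_one_sum[OF FXS[of t]] split[of "\<lambda>i. \<bar>?f i\<bar>"] tT by simp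
    have g1: "(\<Sum>i\<in>C. \<bar>?g i\<bar>) + (\<Sum>i\<in>?N. \<bar>?g i\<bar>) + (\<Sum>i\<in>?M. \<bar>?g i\<bar>) = 1"
      using S_one_sum[OF FXS[of "Suc t"]] split[of "\<lambda>i. \<bar>?g i\<bar>"] tT by simp
    have Ef: "(\<Sum>i\<in>?N. \<bar>?f i\<bar>) \<le> 3/8" using E tT by simp
    have Eg: "(\<Sum>i\<in>?M. \<bar>?g i\<bar>) \<le> 3/8" using E tT by simp
    have ac: "(\<Sum>i\<in>C. \<bar>?f i\<bar>) = \<bar>c t\<bar>" "(\<Sum>i\<in>C. \<bar>?g i\<bar>) = \<bar>c (Suc t)\<bar>" using absc tT by auto
    have sC: "\<bar>c t - c (Suc t)\<bar> \<le> (\<Sum>i\<in>C. \<bar>?f i - ?g i\<bar>)"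
    proof -
      have "c t - c (Suc t) = (\<Sum>i\<in>C. ?f i - ?g i)" unfolding c_def by (simp add: sum_subtractf)
      then show ?thesis by (metis sum_abs)
    qed
    have sN: "(\<Sum>i\<in>?N. \<bar>?g i\<bar>) - (\<Sum>i\<in>?N. \<bar>?f i\<bar>) \<le> (\<Sum>i\<in>?N. \<bar>?f i - ?g i\<bar>)"
      unfolding sum_subtractf[symmetric] by (rule sum_mono) auto
    have sM: "(\<Sum>i\<in>?M. \<bar>?f i\<bar>) - (\<Sum>i\<in>?M. \<bar>?g i\<bar>) \<le> (\<Sum>i\<in>?M. \<bar>?f i - ?g i\<bar>)"
      unfolding sum_subtractf[symmetric] by (rule sum_mono) auto
    have l1: "l1_dist k ?f ?g = (\<Sum>i\<in>C. \<bar>?f i - ?g i\<bar>) + (\<Sum>i\<in>?N. \<bar>?f i - ?g i\<bar>) + (\<Sum>i\<in>?M. \<bar>?f i - ?g i\<bar>)"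
      unfolding l1_dist_def l1_norm_def by (rule split)
    have absdiff: "\<bar>c t - c (Suc t)\<bar> = \<bar>c t\<bar> + \<bar>c (Suc t)\<bar>"
      using cc by (cases "c t \<ge> 0"; cases "c (Suc t) \<ge> 0") (auto simp: mult_le_0_iff)
    have "1/2 \<le> l1_dist k ?f ?g"
      using l1 sC sN sM f1 g1 Ef Eg ac absdiff by linarith
    moreover have "l1_dist k ?f ?g < 1/2"
    proof -
      have "X t \<in> S_inf k" "X (Suc t) \<in> S_inf k" "linf_dist k (X t) (X (Suc t)) \<le> r"
        using XS Xstep tT by auto
      then show ?thesis using small by blast
    qed
    ultimately show False by simp
  qed
  have c0: "c 0 \<noteq> 0" and cT: "c 0 * c T < 0"
  proof -
    obtain v :: real where v: "\<bar>v\<bar> * k = 1" "F (const_vec k 1) = const_vec k v"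
      using F_const_vec[OF FS SP k, of 1] by auto
    obtain w :: real where w: "\<bar>w\<bar> * k = 1" "F (const_vec k (-1)) = const_vec k w"
      using F_const_vec[OF FS SP k, of "-1"] by auto
    have "v \<noteq> w" using v w ne by auto
    moreover have "\<bar>v\<bar> = \<bar>w\<bar>"
    proof -
      have "\<bar>v\<bar> * k = \<bar>w\<bar> * k" using v(1) w(1) by simp
      then show ?thesis using k by simp
    qed
    ultimately have wv: "w = - v" by arith
    have vne: "v \<noteq> 0" using v(1) by auto
    have "c 0 = (\<Sum>i\<in>C. v)" unfolding c_def X0 v(2) using Csub by (intro sum.cong) (auto simp: const_vec_def)
    then have c0v: "c 0 = card C * v" by simp
    have "c T = (\<Sum>i\<in>C. w)" unfolding c_def XT w(2) using Csub by (intro sum.cong) (auto simp: const_vec_def)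
    then have cTw: "c T = - (card C * v)" using wv by simp
    have cardC: "0 < card C" using finC Cne by (simp add: card_gt_0_iff)
    show "c 0 \<noteq> 0" using c0v cardC vne by simp
    have "c 0 * c T = - ((card C * v) * (card C * v))" using c0v cTw by simp
    moreover have "0 < (card C * v) * (card C * v)"
    proof -
      have "real (card C) * v \<noteq> 0" using cardC vne by simp
      then show ?thesis using not_real_square_gt_zero by blast
    qed
    ultimately show "c 0 * c T < 0" by linarith
  qed
  have "0 < c 0 * c t" if "t \<le> T" for t
    using that
  proof (induction t)
    case 0
    then show ?case using c0 not_real_square_gt_zero by blast
  next
    case (Suc t)
    then have a: "0 < c 0 * c t" and b: "0 < c t * c (Suc t)" using step by auto
    have "0 < (c 0 * c t) * (c t * c (Suc t))" using a b by simp
    then have "0 < (c 0 * c (Suc t)) * (c t * c t)" by (simp add: algebra_simps)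
    moreover have "0 \<le> c t * c t" by simp
    ultimately show ?case by (simp add: zero_less_mult_iff)
  qed
  from this[of T] show False using cT by simp
qed

definition clampv :: "real \<Rightarrow> real" where "clampv y = max (-1) (min 1 y)"
definition thr :: "nat \<Rightarrow> nat" where "thr j = 3^j - 1"
definition blk :: "nat \<Rightarrow> nat \<Rightarrow> nat" where
  "blk n i = (if thr n \<le> i then n else (LEAST j. i < thr (Suc j)))"

lemma clampv_abs: "\<bar>clampv y\<bar> \<le> 1" by (simp add: clampv_def)
lemma clampv_lip: "\<bar>clampv a - clampv b\<bar> \<le> \<bar>a - b\<bar>" by (simp add: clampv_def)
lemma clampv_hi: "1 \<le> y \<Longrightarrow> clampv y = 1" by (simp add: clampv_def)
lemma clampv_lo: "y \<le> -1 \<Longrightarrow> clampv y = -1" by (simp add: clampv_def)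

lemma thr_smono: "j < j' \<Longrightarrow> thr j < thr j'"
proof -
  assume "j < j'"
  then have "(3::nat)^j < 3^j'" by (simp add: power_strict_increasing)
  moreover have "(1::nat) \<le> 3^j" by simp
  ultimately show ?thesis unfolding thr_def by linarith
qed

lemma thr_mono: "j \<le> j' \<Longrightarrow> thr j \<le> thr j'"
  using thr_smono by (metis le_less)

lemma thr_0: "thr 0 = 0" by (simp add: thr_def)

lemma blk_props:
  assumes n: "0 < n"
  shows "blk n i \<le> n" "thr (blk n i) \<le> i" "blk n i < n \<Longrightarrow> i < thr (Suc (blk n i))"
proof -
  have all: "blk n i \<le> n \<and> thr (blk n i) \<le> i \<and> (blk n i < n \<longrightarrow> i < thr (Suc (blk n i)))"
  proof (cases "thr n \<le> i")
    case True then show ?thesis by (simp add: blk_def)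
  next
    case False
    let ?b = "LEAST j. i < thr (Suc j)"
    have ex: "i < thr (Suc (n - 1))" using False n by simp
    have b1: "i < thr (Suc ?b)" using ex by (rule LeastI)
    have b2: "?b \<le> n - 1" using ex by (rule Least_le)
    have b3: "thr ?b \<le> i"
    proof (cases ?b)
      case 0 then show ?thesis by (simp add: thr_0)
    next
      case (Suc b')
      then have "b' < ?b" by simp
      then have "\<not> i < thr (Suc b')" by (rule not_less_Least)
      then show ?thesis using Suc by simp
    qed
    show ?thesis using False b1 b2 b3 n by (simp add: blk_def)
  qed
  then show "blk n i \<le> n" "thr (blk n i) \<le> i" "blk n i < n \<Longrightarrow> i < thr (Suc (blk n i))" by auto
qed

lemma blk_lt_iff:
  assumes n: "0 < n" and b: "b \<le> n"
  shows "blk n i < b \<longleftrightarrow> i < thr b"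
proof
  assume a: "blk n i < b"
  then have "i < thr (Suc (blk n i))" using blk_props(3)[OF n] b by simp
  also have "\<dots> \<le> thr b" using a by (intro thr_mono) simp
  finally show "i < thr b" .
next
  assume a: "i < thr b"
  show "blk n i < b"
  proof (rule ccontr)
    assume "\<not> blk n i < b"
    then have "thr b \<le> thr (blk n i)" by (intro thr_mono) simp
    also have "\<dots> \<le> i" using blk_props(2)[OF n] .
    finally show False using a by simp
  qed
qed

lemma blk_eq:
  assumes n: "0 < n" and j: "j \<le> n" and lo: "thr j \<le> i" and hi: "j < n \<Longrightarrow> i < thr (Suc j)"
  shows "blk n i = j"
proof -
  have "\<not> blk n i < j" using blk_lt_iff[OF n j] lo by simp
  moreover have "blk n i \<le> j"
  proof (cases "j < n")
    case True
    then have "blk n i < Suc j" using blk_lt_iff[OF n, of "Suc j" i] hi by simp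
    then show ?thesis by simp
  next
    case False then show ?thesis using blk_props(1)[OF n, of i] j by simp
  qed
  ultimately show ?thesis by simp
qed

definition Hh :: "nat \<Rightarrow> nat \<Rightarrow> nat \<Rightarrow> int" where
  "Hh d t j = int (d*(d+1)) - int t + int d * (int j - (if odd (t+j) then 1 else 0))"
definition Vv :: "nat \<Rightarrow> nat \<Rightarrow> nat \<Rightarrow> real" where
  "Vv d t j = clampv (real_of_int (Hh d t j) / real (d*(d+1)))"
definition Xc :: "nat \<Rightarrow> nat \<Rightarrow> nat \<Rightarrow> nat \<Rightarrow> real" where
  "Xc d k t i = (if i < k then Vv d t (blk (2*d+3) i) else 0)"

lemma ratio_ge: assumes "int D \<le> H" "0 < D" shows "1 \<le> real_of_int H / real D"
proof -
  have "real D \<le> real_of_int H" using assms(1) by (metis of_int_le_iff of_int_of_nat_eq)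
  then show ?thesis using assms(2) by (simp add: le_divide_eq)
qed

lemma ratio_le: assumes "H \<le> - int D" "0 < D" shows "real_of_int H / real D \<le> -1"
proof -
  have "real_of_int H \<le> - real D" using assms(1) by (metis of_int_le_iff of_int_minus of_int_of_nat_eq)
  then show ?thesis using assms(2) by (simp add: divide_le_eq)
qed

lemma Hh_step: "\<bar>Hh d (Suc t) j - Hh d t j\<bar> \<le> int d + 1"
  by (cases "odd (t+j)") (auto simp: Hh_def right_diff_distrib)

lemma Hh_pair: "even (t+b) \<Longrightarrow> Hh d t (Suc b) = Hh d t b"
  by (simp add: Hh_def algebra_simps)

lemma Vv_step: assumes d: "0 < d" shows "\<bar>Vv d (Suc t) j - Vv d t j\<bar> \<le> 1 / real d"
proof -
  let ?D = "real (d*(d+1))"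
  have "0 < d*(d+1)" using d by simp
  then have Dp: "0 < ?D" by (simp only: of_nat_0_less_iff)
  have "\<bar>Vv d (Suc t) j - Vv d t j\<bar> \<le> \<bar>real_of_int (Hh d (Suc t) j) / ?D - real_of_int (Hh d t j) / ?D\<bar>"
    unfolding Vv_def by (rule clampv_lip)
  also have "\<dots> = \<bar>real_of_int (Hh d (Suc t) j - Hh d t j)\<bar> / ?D"
    using Dp by (simp add: diff_divide_distrib[symmetric])
  also have "\<dots> \<le> (real d + 1) / ?D"
  proof (rule divide_right_mono)
    have "real_of_int \<bar>Hh d (Suc t) j - Hh d t j\<bar> \<le> real_of_int (int d + 1)"
      using Hh_step by (simp only: of_int_le_iff)
    then show "\<bar>real_of_int (Hh d (Suc t) j - Hh d t j)\<bar> \<le> real d + 1" by simp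
  qed (use Dp in simp)
  also have "\<dots> = 1 / real d"
  proof -
    have "real (d*(d+1)) = real d * (real d + 1)" by (simp add: algebra_simps)
    moreover have "real d + 1 \<noteq> 0" by simp
    ultimately show ?thesis by simp
  qed
  finally show ?thesis .
qed

lemma Vv_0: assumes d: "0 < d" shows "Vv d 0 j = 1"
proof -
  have "int (d*(d+1)) \<le> Hh d 0 j" unfolding Hh_def by (cases "odd j") (auto simp: odd_pos)
  then show ?thesis unfolding Vv_def using d by (intro clampv_hi ratio_ge) auto
qed

lemma Vv_T: assumes d: "0 < d" and j: "j \<le> 2*d+3"
  shows "Vv d (2*(d*(d+1)) + d*(2*d+3)) j = -1"
proof -
  have "int d * (int j - (if odd (2*(d*(d+1)) + d*(2*d+3) + j) then 1 else 0)) \<le> int d * int (2*d+3)"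
    using j by (intro mult_left_mono) auto
  then have "Hh d (2*(d*(d+1)) + d*(2*d+3)) j \<le> - int (d*(d+1))" unfolding Hh_def by simp
  then show ?thesis unfolding Vv_def using d by (intro clampv_lo ratio_le) auto
qed

lemma Vv_top: assumes d: "0 < d" and t: "t \<le> 2*(d*(d+1))" shows "Vv d t (2*d+3) = 1"
proof -
  have "int d * (int (2*d+2)) \<le> int d * (int (2*d+3) - (if odd (t + (2*d+3)) then 1 else 0))"
    by (intro mult_left_mono) auto
  moreover have "int t \<le> int d * int (2*d+2)"
  proof -
    have "t \<le> d * (2*d+2)" using t by (simp add: algebra_simps)
    then show ?thesis by (metis of_nat_le_iff of_nat_mult)
  qed
  ultimately have "int (d*(d+1)) \<le> Hh d t (2*d+3)" unfolding Hh_def by linarith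
  then show ?thesis unfolding Vv_def using d by (intro clampv_hi ratio_ge) auto
qed

lemma Vv_bot: assumes d: "0 < d" and t: "2*(d*(d+1)) \<le> t" shows "Vv d t 0 = -1"
proof -
  have a: "int d * (int 0 - (if odd (t+0) then 1 else 0)) \<le> 0" by auto
  have b: "2 * int (d*(d+1)) \<le> int t" using t by linarith
  have "Hh d t 0 \<le> - int (d*(d+1))" unfolding Hh_def using a b by linarith
  then show ?thesis unfolding Vv_def using d by (intro clampv_lo ratio_le) auto
qed

lemma thr_diff: "thr (Suc b) - thr b = 2 * 3^b"
proof -
  have "(1::nat) \<le> 3^b" by simp
  then show ?thesis unfolding thr_def by simp
qed

lemma Nlev_constr:
  assumes d: "0 < d" and n: "n = 2*d+3" and kk: "thr n < k" "8 * thr n \<le> 3 * k" and j0: "j0 < k"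
  shows "8 * card {i \<in> {i. i < k \<and> blk n i < n \<and> even (t + blk n i)}. Xc d k t i = Xc d k t j0}
         \<le> 3 * card {i. i<k \<and> Xc d k t i = Xc d k t j0}"
proof -
  have n0: "0 < n" using n by simp
  let ?X = "Xc d k t"
  have Xblk: "?X i = Vv d t (blk n i)" if "i < k" for i using that n by (simp add: Xc_def)
  define L where "L = {i. i<k \<and> ?X i = ?X j0}"
  define NL where "NL = {i \<in> {i. i < k \<and> blk n i < n \<and> even (t + blk n i)}. ?X i = ?X j0}"
  have finL: "finite L" unfolding L_def by simp
  have j0L: "j0 \<in> L" unfolding L_def using j0 by simp
  define b where "b = Max (blk n ` L)"
  have "b \<in> blk n ` L" unfolding b_def using finL j0L by (intro Max_in) auto
  then obtain i1 where i1: "i1 \<in> L" "blk n i1 = b" by auto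
  have bmax: "blk n i \<le> b" if "i \<in> L" for i unfolding b_def using finL that by (intro Max_ge) auto
  have bn: "b \<le> n" using blk_props(1)[OF n0] i1 by metis
  have i1k: "i1 < k" "?X i1 = ?X j0" using i1 unfolding L_def by auto
  have claim: "\<not> (b < n \<and> even (t + b))"
  proof
    assume h: "b < n \<and> even (t + b)"
    let ?i2 = "thr (Suc b)"
    have "thr (Suc b) \<le> thr n" using h by (intro thr_mono) simp
    then have i2k: "?i2 < k" using kk by simp
    have bi2: "blk n ?i2 = Suc b"
      using h by (intro blk_eq[OF n0]) (auto intro: thr_smono)
    have "?X ?i2 = ?X i1" using Xblk[OF i2k] Xblk[OF i1k(1)] bi2 i1(2) h
      by (simp add: Vv_def Hh_pair)
    then have "?i2 \<in> L" using i2k i1k unfolding L_def by simp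
    then have "Suc b \<le> b" using bmax bi2 by metis
    then show False by simp
  qed
  have NLL: "NL \<subseteq> L" unfolding NL_def L_def by auto
  have NLb: "blk n i < b" if "i \<in> NL" for i
  proof -
    have "blk n i \<le> b" using bmax NLL that by auto
    moreover have "blk n i \<noteq> b" using claim that unfolding NL_def by auto
    ultimately show ?thesis by simp
  qed
  have "NL \<subseteq> {..<thr b}" using NLb blk_lt_iff[OF n0 bn] by auto
  then have c1: "card NL \<le> thr b" by (metis card_lessThan card_mono finite_lessThan)
  define Bb where "Bb = {i. i<k \<and> blk n i = b}"
  have BbL: "Bb \<subseteq> L"
  proof
    fix i assume "i \<in> Bb"
    then have "i < k" "blk n i = b" unfolding Bb_def by auto
    then have "?X i = ?X i1" using Xblk i1k(1) i1(2) by simp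
    then show "i \<in> L" using \<open>i<k\<close> i1k unfolding L_def by simp
  qed
  have disj: "NL \<inter> Bb = {}" using NLb unfolding Bb_def by auto
  have finNL: "finite NL" using NLL finL finite_subset by blast
  have finBb: "finite Bb" unfolding Bb_def by simp
  have c2: "card NL + card Bb \<le> card L"
  proof -
    have "card NL + card Bb = card (NL \<union> Bb)" using disj finNL finBb by (simp add: card_Un_disjoint)
    also have "\<dots> \<le> card L" using NLL BbL finL by (intro card_mono) auto
    finally show ?thesis .
  qed
  have c3: "5 * thr b \<le> 3 * card Bb"
  proof (cases "b < n")
    case True
    have sub: "{thr b..<thr (Suc b)} \<subseteq> Bb"
    proof
      fix i assume i: "i \<in> {thr b..<thr (Suc b)}"
      have "thr (Suc b) \<le> thr n" using True by (intro thr_mono) simp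
      then have "i < k" using i kk by simp
      moreover have "blk n i = b" using i True by (intro blk_eq[OF n0]) auto
      ultimately show "i \<in> Bb" unfolding Bb_def by simp
    qed
    have "card {thr b..<thr (Suc b)} \<le> card Bb" using sub finBb by (rule card_mono[rotated])
    then have "2 * 3^b \<le> card Bb" using thr_diff[of b] by simp
    moreover have "thr b \<le> 3^b" unfolding thr_def by simp
    ultimately show ?thesis by linarith
  next
    case False
    then have bn': "b = n" using bn by simp
    have sub: "{thr n..<k} \<subseteq> Bb"
    proof
      fix i assume i: "i \<in> {thr n..<k}"
      have "blk n i = n" using i by (intro blk_eq[OF n0]) auto
      then show "i \<in> Bb" using i bn' unfolding Bb_def by simp
    qed
    have "card {thr n..<k} \<le> card Bb" using sub finBb by (rule card_mono[rotated])
    then have "k - thr n \<le> card Bb" by simp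
    then show ?thesis using kk unfolding bn' by linarith
  qed
  have "8 * card NL \<le> 3 * card L" using c1 c2 c3 by linarith
  then show ?thesis unfolding NL_def L_def .
qed

lemma pow_bound_aux: "8 * (3::nat)^(2*m+6) \<le> 19^(2*m+3)"
proof (induction m)
  case 0 then show ?case by simp
next
  case (Suc m)
  have e1: "2 * Suc m + 6 = (2*m+6) + 2" by simp
  have e2: "2 * Suc m + 3 = (2*m+3) + 2" by simp
  have p1: "(3::nat)^(2*Suc m+6) = 3^(2*m+6) * 3^2" unfolding e1 by (rule power_add)
  have p2: "(19::nat)^(2*Suc m+3) = 19^(2*m+3) * 19^2" unfolding e2 by (rule power_add)
  have "8 * (3::nat)^(2 * Suc m + 6) = 9 * (8 * 3^(2*m+6))" unfolding p1 by simp
  also have "\<dots> \<le> 9 * 19^(2*m+3)" using Suc by simp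
  also have "\<dots> \<le> 361 * 19^(2*m+3)" by simp
  also have "\<dots> = 19^(2 * Suc m + 3)" unfolding p2 by simp
  finally show ?case .
qed

lemma pow_bound: assumes "2 \<le> d" shows "8 * (3::nat)^(2*d+2) \<le> 19^(2*d-1)"
proof -
  obtain m where m: "d = m + 2" using assms by (metis add.commute le_Suc_ex)
  have e: "2*d+2 = 2*m+6" "2*d-1 = 2*m+3" using m by auto
  show ?thesis unfolding e by (rule pow_bound_aux)
qed

lemma F_pm:
  assumes FS: "F ` S_inf k \<subseteq> S_one k" and SP: "step_preserving k F" and k: "0<k"
    and ne: "F (const_vec k 1) \<noteq> F (const_vec k (-1))"
  shows "\<exists>v::real. \<bar>v\<bar> * k = 1 \<and> F (const_vec k 1) = const_vec k v \<and> F (const_vec k (-1)) = const_vec k (-v)"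
proof -
  obtain v :: real where v: "\<bar>v\<bar> * k = 1" "F (const_vec k 1) = const_vec k v"
    using F_const_vec[OF FS SP k, of 1] by auto
  obtain w :: real where w: "\<bar>w\<bar> * k = 1" "F (const_vec k (-1)) = const_vec k w"
    using F_const_vec[OF FS SP k, of "-1"] by auto
  have "v \<noteq> w" using v w ne by auto
  moreover have "\<bar>v\<bar> = \<bar>w\<bar>"
  proof -
    have "\<bar>v\<bar> * k = \<bar>w\<bar> * k" using v(1) w(1) by simp
    then show ?thesis using k by simp
  qed
  ultimately have wv: "w = - v" by arith
  then show ?thesis using v w by auto
qed

lemma part1_d1:
  assumes FS: "F ` S_inf k \<subseteq> S_one k" and SP: "step_preserving k F" and k: "2 \<le> k"
    and ne: "F (const_vec k 1) \<noteq> F (const_vec k (-1))"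
    and small: "\<forall>x\<in>S_inf k. \<forall>y\<in>S_inf k. linf_dist k x y \<le> 1 \<longrightarrow> l1_dist k (F x) (F y) < 1/2"
  shows False
proof -
  have k0: "0 < k" using k by simp
  define p0 where "p0 = const_vec k 1"
  define p3 where "p3 = const_vec k (-1)"
  define p1 :: "nat \<Rightarrow> real" where "p1 = (\<lambda>i. if i < k then (if i = 0 then 1 else 0) else 0)"
  define p2 :: "nat \<Rightarrow> real" where "p2 = (\<lambda>i. if i < k then (if i = 0 then 0 else -1) else 0)"
  have S0: "p0 \<in> S_inf k" unfolding p0_def using k0 by (simp add: const_in_S_inf)
  have S3: "p3 \<in> S_inf k" unfolding p3_def using k0 by (simp add: const_in_S_inf)
  have S1: "p1 \<in> S_inf k" by (rule S_inf_I[where j=0]) (use k0 in \<open>auto simp: p1_def vec_k_def\<close>)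
  have S2: "p2 \<in> S_inf k" by (rule S_inf_I[where j=1]) (use k in \<open>auto simp: p2_def vec_k_def\<close>)
  have d01: "linf_dist k p0 p1 \<le> 1" by (rule linf_dist_le) (auto simp: p0_def p1_def const_vec_def)
  have d12: "linf_dist k p1 p2 \<le> 1" by (rule linf_dist_le) (auto simp: p1_def p2_def)
  have d23: "linf_dist k p2 p3 \<le> 1" by (rule linf_dist_le) (auto simp: p2_def p3_def const_vec_def)
  have "l1_dist k (F p0) (F p1) < 1/2" using small S0 S1 d01 by blast
  moreover have "l1_dist k (F p1) (F p2) < 1/2" using small S1 S2 d12 by blast
  moreover have "l1_dist k (F p2) (F p3) < 1/2" using small S2 S3 d23 by blast
  moreover have "l1_dist k (F p0) (F p3) \<le> l1_dist k (F p0) (F p1) + l1_dist k (F p1) (F p2) + l1_dist k (F p2) (F p3)"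
    using l1_dist_tri[of k "F p0" "F p3" "F p1"] l1_dist_tri[of k "F p1" "F p3" "F p2"] by linarith
  moreover have "l1_dist k (F p0) (F p3) = 2"
  proof -
    obtain v :: real where v: "\<bar>v\<bar> * k = 1" "F p0 = const_vec k v" "F p3 = const_vec k (-v)"
      using F_pm[OF FS SP k0 ne] unfolding p0_def p3_def by blast
    have "l1_dist k (F p0) (F p3) = (\<Sum>i<k. 2 * \<bar>v\<bar>)" unfolding l1_dist_def l1_norm_def v(2,3)
      by (intro sum.cong) (auto simp: const_vec_def)
    also have "\<dots> = 2 * (\<bar>v\<bar> * k)" by simp
    finally show ?thesis using v(1) by simp
  qed
  ultimately show False by linarith
qed

lemma part1_big:
  assumes d: "2 \<le> d" and kbig: "8 * 3^(2*d+2) \<le> k"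
    and FS: "F ` S_inf k \<subseteq> S_one k" and SP: "step_preserving k F"
    and ne: "F (const_vec k 1) \<noteq> F (const_vec k (-1))"
    and small: "\<forall>x\<in>S_inf k. \<forall>y\<in>S_inf k. linf_dist k x y \<le> 1 / real d \<longrightarrow> l1_dist k (F x) (F y) < 1/2"
  shows False
proof -
  define n where "n = 2*d+3"
  have d0: "0 < d" using d by simp
  have n0: "0 < n" unfolding n_def by simp
  have en: "2*d+3 = Suc (2*d+2)" by simp
  have "3^n = 3 * (3::nat)^(2*d+2)" unfolding n_def en by (rule power_Suc)
  then have tn: "thr n = 3 * 3^(2*d+2) - 1" unfolding thr_def by (simp only:)
  have aux: "\<And>y k::nat. 1 \<le> y \<Longrightarrow> 8*y \<le> k \<Longrightarrow> 3*y - 1 < k \<and> 8*(3*y-1) \<le> 3*k" by arith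
  have "1 \<le> (3::nat)^(2*d+2)" by simp
  from aux[OF this kbig] have kk1: "thr n < k" "8 * thr n \<le> 3 * k" unfolding tn by auto
  define T where "T = 2*(d*(d+1)) + d*(2*d+3)"
  define C where "C = {i. thr n \<le> i \<and> i < k}"
  define N where "N = (\<lambda>t. {i. i < k \<and> blk n i < n \<and> even (t + blk n i)})"
  have Xn: "Xc d k t i = (if i < k then Vv d t (blk n i) else 0)" for t i unfolding Xc_def n_def by simp
  have blkC: "blk n i = n \<longleftrightarrow> thr n \<le> i" for i
    using blk_lt_iff[OF n0 order.refl, of i] blk_props(1)[OF n0, of i] by auto
  have blkN: "thr n \<le> i \<Longrightarrow> blk n i = n" for i by (simp add: blk_def)
  have blkLt: "blk n i < n \<longleftrightarrow> i < thr n" for i using blk_lt_iff[OF n0 order.refl] .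
  show False
  proof (rule chain_contra[where X = "Xc d k" and T = T and C = C and N = N and r = "1 / real d", OF FS SP ne small])
    show "Xc d k 0 = const_vec k 1" using d0 by (auto simp: Xn const_vec_def Vv_0)
    show "Xc d k T = const_vec k (-1)"
    proof
      fix i show "Xc d k T i = const_vec k (-1) i"
        using Vv_T[OF d0 blk_props(1)[OF n0, of i, unfolded n_def]] unfolding T_def
        by (auto simp: Xn const_vec_def n_def)
    qed
    show "\<forall>t\<le>T. Xc d k t \<in> S_inf k"
    proof (intro allI impI)
      fix t assume "t \<le> T"
      have vec: "vec_k k (Xc d k t)" by (simp add: vec_k_def Xn)
      have bnd: "\<forall>i<k. \<bar>Xc d k t i\<bar> \<le> 1" by (simp add: Xn Vv_def clampv_abs)
      show "Xc d k t \<in> S_inf k"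
      proof (cases "t \<le> 2*(d*(d+1))")
        case True
        have "blk n (thr n) = n" using blkC by simp
        then have "Xc d k t (thr n) = 1" using Vv_top[OF d0 True] kk1 by (simp add: Xn n_def)
        then show ?thesis using vec bnd kk1 by (intro S_inf_I[where j = "thr n"]) auto
      next
        case False
        have "blk n 0 = 0" by (rule blk_eq[OF n0]) (auto simp: thr_def)
        then have "Xc d k t 0 = -1" using Vv_bot[OF d0] False kk1 by (simp add: Xn)
        then show ?thesis using vec bnd kk1 by (intro S_inf_I[where j = 0]) auto
      qed
    qed
    show "\<forall>t<T. linf_dist k (Xc d k t) (Xc d k (Suc t)) \<le> 1 / real d"
    proof (intro allI impI linf_dist_le)
      fix t i assume "i < k"
      then show "\<bar>Xc d k t i - Xc d k (Suc t) i\<bar> \<le> 1 / real d"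
        using Vv_step[OF d0, of t "blk n i"] by (simp add: Xn abs_minus_commute)
    qed simp
    show "C \<subseteq> {..<k}" unfolding C_def by auto
    show "C \<noteq> {}" unfolding C_def using kk1 by auto
    show "\<forall>t\<le>T. \<forall>i\<in>C. \<forall>j\<in>C. Xc d k t i = Xc d k t j"
    proof (intro allI impI ballI)
      fix t i j assume "i \<in> C" "j \<in> C"
      then have ij: "thr n \<le> i" "thr n \<le> j" "i < k" "j < k" unfolding C_def by auto
      have "Xc d k t i = Vv d t n" using ij(3) blkN[OF ij(1)] by (simp add: Xn)
      moreover have "Xc d k t j = Vv d t n" using ij(4) blkN[OF ij(2)] by (simp add: Xn)
      ultimately show "Xc d k t i = Xc d k t j" by simp
    qed
    have Nsub1: "N t \<subseteq> {..<k} - C" for t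
    proof
      fix i assume "i \<in> N t"
      then have "i < k" "blk n i < n" unfolding N_def by auto
      then have "i < k" "i < thr n" using blkLt by blast+
      then show "i \<in> {..<k} - C" unfolding C_def by auto
    qed
    show "\<forall>t\<le>T. N t \<subseteq> {..<k} - C" using Nsub1 by blast
    show "\<forall>t<T. N t \<inter> N (Suc t) = {} \<and> N t \<union> N (Suc t) = {..<k} - C"
    proof (intro allI impI conjI)
      fix t
      show "N t \<inter> N (Suc t) = {}"
      proof (rule ccontr)
        assume "N t \<inter> N (Suc t) \<noteq> {}"
        then obtain i where "i \<in> N t" "i \<in> N (Suc t)" by blast
        then have "even (t + blk n i)" "even (Suc t + blk n i)" unfolding N_def by auto
        then show False by simp
      qed
      show "N t \<union> N (Suc t) = {..<k} - C"
      proof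
        show "N t \<union> N (Suc t) \<subseteq> {..<k} - C" using Nsub1 by blast
        show "{..<k} - C \<subseteq> N t \<union> N (Suc t)"
        proof
          fix i assume "i \<in> {..<k} - C"
          then have "i<k" "\<not> thr n \<le> i" unfolding C_def by auto
          then have ik: "i<k" "blk n i < n" using blkLt by auto
          show "i \<in> N t \<union> N (Suc t)"
          proof (cases "even (t + blk n i)")
            case True then show ?thesis using ik unfolding N_def by blast
          next
            case False then have "even (Suc t + blk n i)" by simp
            then show ?thesis using ik unfolding N_def by blast
          qed
        qed
      qed
    qed
    show "\<forall>t\<le>T. \<forall>j<k. 8 * card {i \<in> N t. Xc d k t i = Xc d k t j} \<le> 3 * card {i. i < k \<and> Xc d k t i = Xc d k t j}"
    proof (intro allI impI)
      fix t j assume "j < k"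
      show "8 * card {i \<in> N t. Xc d k t i = Xc d k t j} \<le> 3 * card {i. i < k \<and> Xc d k t i = Xc d k t j}"
        unfolding N_def by (rule Nlev_constr[OF d0 n_def kk1 \<open>j<k\<close>])
    qed
  qed
qed

lemma part1:
  assumes d: "1 \<le> d" and k: "19^(2*d-1)+1 \<le> k"
    and FS: "F ` S_inf k \<subseteq> S_one k" and SP: "step_preserving k F"
    and ne: "F (const_vec k 1) \<noteq> F (const_vec k (-1))"
  shows "1/2 \<le> modulus k F (1 / real d)"
proof (rule ccontr)
  assume "\<not> ?thesis"
  then have m: "modulus k F (1 / real d) < 1/2" by simp
  have small: "\<forall>x\<in>S_inf k. \<forall>y\<in>S_inf k. linf_dist k x y \<le> 1 / real d \<longrightarrow> l1_dist k (F x) (F y) < 1/2"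
  proof (intro ballI impI)
    fix x y assume "x \<in> S_inf k" "y \<in> S_inf k" "linf_dist k x y \<le> 1 / real d"
    then have "l1_dist k (F x) (F y) \<le> modulus k F (1 / real d)" by (rule modulus_pair[OF FS])
    then show "l1_dist k (F x) (F y) < 1/2" using m by linarith
  qed
  show False
  proof (cases "d = 1")
    case True
    have "(2::nat) \<le> 19^(2*d-1)+1" using True by simp
    then have k2: "2 \<le> k" using k by linarith
    have small1: "\<forall>x\<in>S_inf k. \<forall>y\<in>S_inf k. linf_dist k x y \<le> 1 \<longrightarrow> l1_dist k (F x) (F y) < 1/2"
      using small True by simp
    show False by (rule part1_d1[OF FS SP k2 ne small1])
  next
    case False
    then have d2: "2 \<le> d" using d by simp
    have "8 * 3^(2*d+2) \<le> k" using pow_bound[OF d2] k by linarith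
    then show False by (rule part1_big[OF d2 _ FS SP ne small])
  qed
qed

theorem theorem1p4:
  fixes d :: nat
  assumes "d \<ge> 1"
  shows "(\<forall>k :: nat. \<forall>F. k \<ge> 19 ^ (2 * d - 1) + 1
            \<longrightarrow> F ` S_inf k \<subseteq> S_one k
            \<longrightarrow> cont_wrt (S_inf k) (linf_dist k) (l1_dist k) F
            \<longrightarrow> step_preserving k F
            \<longrightarrow> F (const_vec k 1) \<noteq> F (const_vec k (-1))
            \<longrightarrow> modulus k F (1 / real d) \<ge> 1 / 2)
       \<and> \<not> (\<exists>Fs :: nat \<Rightarrow> (nat \<Rightarrow> real) \<Rightarrow> (nat \<Rightarrow> real).
            (\<forall>k\<ge>1. homeo_k k (Fs k) \<and> step_preserving k (Fs k)) \<and>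
            (\<forall>\<epsilon>>0. \<exists>\<delta>>0. \<forall>k\<ge>1. modulus k (Fs k) \<delta> < \<epsilon>))"
proof
  show "\<forall>k :: nat. \<forall>F. k \<ge> 19 ^ (2 * d - 1) + 1
            \<longrightarrow> F ` S_inf k \<subseteq> S_one k
            \<longrightarrow> cont_wrt (S_inf k) (linf_dist k) (l1_dist k) F
            \<longrightarrow> step_preserving k F
            \<longrightarrow> F (const_vec k 1) \<noteq> F (const_vec k (-1))
            \<longrightarrow> modulus k F (1 / real d) \<ge> 1 / 2"
    using part1[OF assms] by blast
next
  show "\<not> (\<exists>Fs :: nat \<Rightarrow> (nat \<Rightarrow> real) \<Rightarrow> (nat \<Rightarrow> real).
            (\<forall>k\<ge>1. homeo_k k (Fs k) \<and> step_preserving k (Fs k)) \<and>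
            (\<forall>\<epsilon>>0. \<exists>\<delta>>0. \<forall>k\<ge>1. modulus k (Fs k) \<delta> < \<epsilon>))"
  proof
    assume "\<exists>Fs :: nat \<Rightarrow> (nat \<Rightarrow> real) \<Rightarrow> (nat \<Rightarrow> real).
            (\<forall>k\<ge>1. homeo_k k (Fs k) \<and> step_preserving k (Fs k)) \<and>
            (\<forall>\<epsilon>>0. \<exists>\<delta>>0. \<forall>k\<ge>1. modulus k (Fs k) \<delta> < \<epsilon>)"
    then obtain Fs :: "nat \<Rightarrow> (nat \<Rightarrow> real) \<Rightarrow> (nat \<Rightarrow> real)" where
      H: "\<forall>k\<ge>1. homeo_k k (Fs k) \<and> step_preserving k (Fs k)"
      and U: "\<forall>\<epsilon>>0. \<exists>\<delta>>0. \<forall>k\<ge>1. modulus k (Fs k) \<delta> < \<epsilon>" by blast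
    obtain \<delta> :: real where dp: "\<delta> > 0" and U2: "\<forall>k\<ge>1. modulus k (Fs k) \<delta> < 1/2"
      using U by (meson zero_less_divide_1_iff zero_less_numeral)
    obtain e :: nat where e: "1 / \<delta> < real e" using reals_Archimedean2 by blast
    have "0 < 1 / \<delta>" using dp by simp
    then have e0: "0 < e" using e by (metis of_nat_0_less_iff order.strict_trans)
    then have e1: "1 \<le> e" by simp
    have ed: "1 / real e \<le> \<delta>"
    proof -
      have "1 < \<delta> * real e" using e dp by (simp add: divide_less_eq mult.commute)
      then show ?thesis using e0 by (simp add: divide_le_eq mult.commute)
    qed
    define k where "k = 19^(2*e-1)+(1::nat)"
    have k1: "1 \<le> k" unfolding k_def by simp
    let ?F = "Fs k"
    have hk: "homeo_k k ?F" and spk: "step_preserving k ?F" using H k1 by auto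
    have FS: "?F ` S_inf k \<subseteq> S_one k" using hk unfolding homeo_k_def by blast
    have inj: "inj_on ?F (S_inf k)" using hk unfolding homeo_k_def by blast
    have c1: "const_vec k 1 \<in> S_inf k" "const_vec k (-1) \<in> S_inf k" using k1 by (auto intro: const_in_S_inf)
    have "const_vec k 1 \<noteq> const_vec k (-1)"
    proof
      assume "const_vec k 1 = const_vec k (-1)"
      then have "const_vec k 1 0 = const_vec k (-1) 0" by simp
      then show False using k1 by (simp add: const_vec_def)
    qed
    then have ne: "?F (const_vec k 1) \<noteq> ?F (const_vec k (-1))" using inj c1 by (meson inj_on_eq_iff)
    have "1/2 \<le> modulus k ?F (1 / real e)" by (rule part1[OF e1 _ FS spk ne]) (simp add: k_def)
    also have "\<dots> \<le> modulus k ?F \<delta>" using k1 ed by (intro modulus_mono[OF FS]) auto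
    also have "\<dots> < 1/2" using U2 k1 by blast
    finally show False by simp
  qed
qed


end
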